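(* Let $\pi$ be a probability density on $\mathbb{R}^d$, let $0<\beta_n<\dots<\beta_1<\beta_0=1$, let $N\ge2$, and let $\pi_Q$ be the density on $(\mathbb{R}^d)^{N(n+1)}$ given by $$\pi_Q(\mathbf{x})\propto\prod_{i=1}^N\prod_{j=0}^n \pi(x_{(i,j)})^{\beta_j}.$$ Let $P_1$ be a within-temperature Markov kernel that is $\pi_Q$-invariant, and let $P_2$ be the QuanTA temperature swap kernel described in the context. Then for any integers $k,T\ge1$ the Markov chain generated by the kernel $(P_2\circ P_1^k)^T$ is $\pi_Q$-invariant.
   Context: The QuanTA swap kernel $P_2$ is the composition of two phases. Phase 1: split the components into $C_1=\{x_{(i,j)}: i\le\lfloor N/2\rfloor\}$ and $C_2=\{x_{(i,j)}: i>\lfloor N/2\rfloor\}$. From the components in $C_1$ only (e.g. via a clustering procedure followed by local optimisation of $\pi$), compute points $\mu_1,\dots,\mu_K\in\mathbb{R}^d$. For each $i>\lfloor N/2\rfloor$, sample $l$ uniformly from $\{0,\dots,n-1\}$ and propose a transformed swap between $x_{(i,l)}$ (level $\beta_l$) and $x_{(i,l+1)}$ (level $\beta_{l+1}$): with $Z(x)=\arg\min_h m(x,\mu_h)$ for a metric $m$, $g(x,\beta_a,\beta_b)=(\beta_a/\beta_b)^{1/2}(x-\mu_{Z(x)})+\mu_{Z(x)}$ and $A_{ab}=\{x: Z(g(x,\beta_a,\beta_b))=Z(x)\}$, the level-$\beta_{l+1}$ component becomes $g(x_{(i,l)},\beta_l,\beta_{l+1})$ and the level-$\beta_l$ component becomes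 $g(x_{(i,l+1)},\beta_{l+1},\beta_l)$, accepted with probability $\min\big(1,\frac{\pi(g(x_{(i,l)},\beta_l,\beta_{l+1}))^{\beta_{l+1}}\pi(g(x_{(i,l+1)},\beta_{l+1},\beta_l))^{\beta_l}}{\pi(x_{(i,l)})^{\beta_l}\pi(x_{(i,l+1)})^{\beta_{l+1}}}\mathbb{1}_{\{x_{(i,l)}\in A_{l,l+1}\}}\mathbb{1}_{\{x_{(i,l+1)}\in A_{l+1,l}\}}\big)$. Phase 2: repeat Phase 1 with the roles of $C_1$ and $C_2$ reversed. *)

theory Defs
  imports "HOL-Probability.Probability"
begin

text \<open>Configurations: components x(i,j), i in {1..N} (replica), j in {0..n} (temperature level).\<close>

definition cfg_index :: "nat \<Rightarrow> nat \<Rightarrow> (nat \<times> nat) set" where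
  "cfg_index N n = {1..N} \<times> {0..n}"

definition cfg_space :: "nat \<Rightarrow> nat \<Rightarrow> (nat \<times> nat \<Rightarrow> 'a::euclidean_space) measure" where
  "cfg_space N n = PiM (cfg_index N n) (\<lambda>_. lborel)"

definition unnorm_piQ :: "('a::euclidean_space \<Rightarrow> real) \<Rightarrow> (nat \<Rightarrow> real) \<Rightarrow> nat \<Rightarrow> nat
    \<Rightarrow> (nat \<times> nat \<Rightarrow> 'a) \<Rightarrow> real" where
  "unnorm_piQ \<pi> \<beta> N n x = (\<Prod>p\<in>cfg_index N n. \<pi> (x p) powr \<beta> (snd p))"

definition piQ :: "('a::euclidean_space \<Rightarrow> real) \<Rightarrow> (nat \<Rightarrow> real) \<Rightarrow> nat \<Rightarrow> nat
    \<Rightarrow> (nat \<times> nat \<Rightarrow> 'a) measure" where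
  "piQ \<pi> \<beta> N n = density (cfg_space N n)
     (\<lambda>x. ennreal (unnorm_piQ \<pi> \<beta> N n x) / (\<integral>\<^sup>+ y. ennreal (unnorm_piQ \<pi> \<beta> N n y) \<partial>cfg_space N n))"

definition nearest :: "('a \<Rightarrow> 'a \<Rightarrow> real) \<Rightarrow> (nat \<Rightarrow> 'a) \<Rightarrow> nat \<Rightarrow> 'a \<Rightarrow> nat" where
  "nearest m mu K x = (LEAST h. h < K \<and> (\<forall>h'<K. m x (mu h) \<le> m x (mu h')))"

definition gmap :: "('a::euclidean_space \<Rightarrow> 'a \<Rightarrow> real) \<Rightarrow> (nat \<Rightarrow> 'a) \<Rightarrow> nat \<Rightarrow> 'a \<Rightarrow> real \<Rightarrow> real \<Rightarrow> 'a" where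
  "gmap m mu K x a b = (let c = mu (nearest m mu K x) in ((a / b) powr (1/2)) *\<^sub>R (x - c) + c)"

definition inA :: "('a::euclidean_space \<Rightarrow> 'a \<Rightarrow> real) \<Rightarrow> (nat \<Rightarrow> 'a) \<Rightarrow> nat \<Rightarrow> real \<Rightarrow> real \<Rightarrow> 'a \<Rightarrow> bool" where
  "inA m mu K a b x \<longleftrightarrow> nearest m mu K (gmap m mu K x a b) = nearest m mu K x"

definition swap_prop :: "('a::euclidean_space \<Rightarrow> 'a \<Rightarrow> real) \<Rightarrow> (nat \<Rightarrow> 'a) \<Rightarrow> nat \<Rightarrow> (nat \<Rightarrow> real)
    \<Rightarrow> nat \<Rightarrow> nat \<Rightarrow> (nat \<times> nat \<Rightarrow> 'a) \<Rightarrow> (nat \<times> nat \<Rightarrow> 'a)" where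
  "swap_prop m mu K \<beta> i l x =
     x((i, Suc l) := gmap m mu K (x (i, l)) (\<beta> l) (\<beta> (Suc l)),
       (i, l) := gmap m mu K (x (i, Suc l)) (\<beta> (Suc l)) (\<beta> l))"

definition swap_acc :: "('a::euclidean_space \<Rightarrow> real) \<Rightarrow> ('a \<Rightarrow> 'a \<Rightarrow> real) \<Rightarrow> (nat \<Rightarrow> 'a) \<Rightarrow> nat
    \<Rightarrow> (nat \<Rightarrow> real) \<Rightarrow> nat \<Rightarrow> nat \<Rightarrow> (nat \<times> nat \<Rightarrow> 'a) \<Rightarrow> real" where
  "swap_acc \<pi> m mu K \<beta> i l x =
     min 1 ((\<pi> (gmap m mu K (x (i, l)) (\<beta> l) (\<beta> (Suc l))) powr \<beta> (Suc l)
             * \<pi> (gmap m mu K (x (i, Suc l)) (\<beta> (Suc l)) (\<beta> l)) powr \<beta> l)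
            / (\<pi> (x (i, l)) powr \<beta> l * \<pi> (x (i, Suc l)) powr \<beta> (Suc l))
            * (if inA m mu K (\<beta> l) (\<beta> (Suc l)) (x (i, l))
                  \<and> inA m mu K (\<beta> (Suc l)) (\<beta> l) (x (i, Suc l)) then 1 else 0))"

definition swap_row_kernel :: "('a::euclidean_space \<Rightarrow> real) \<Rightarrow> ('a \<Rightarrow> 'a \<Rightarrow> real)
    \<Rightarrow> ((nat \<times> nat \<Rightarrow> 'a) \<Rightarrow> nat \<Rightarrow> 'a) \<Rightarrow> ((nat \<times> nat \<Rightarrow> 'a) \<Rightarrow> nat)
    \<Rightarrow> (nat \<Rightarrow> real) \<Rightarrow> nat \<Rightarrow> nat \<Rightarrow> nat \<Rightarrow> (nat \<times> nat \<Rightarrow> 'a) \<Rightarrow> (nat \<times> nat \<Rightarrow> 'a) measure" where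
  "swap_row_kernel \<pi> m mufun Kfun \<beta> N n i x =
     distr (measure_pmf
       (bind_pmf (pmf_of_set {..<n}) (\<lambda>l.
          map_pmf (\<lambda>b. if b then swap_prop m (mufun x) (Kfun x) \<beta> i l x else x)
            (bernoulli_pmf (swap_acc \<pi> m (mufun x) (Kfun x) \<beta> i l x)))))
       (cfg_space N n) (\<lambda>y. y)"

fun kseq :: "'b measure \<Rightarrow> ('b \<Rightarrow> 'b measure) list \<Rightarrow> 'b \<Rightarrow> 'b measure" where
  "kseq S [] = return S"
| "kseq S (K # Ks) = (\<lambda>x. K x \<bind> kseq S Ks)"

fun kpow :: "'b measure \<Rightarrow> ('b \<Rightarrow> 'b measure) \<Rightarrow> nat \<Rightarrow> 'b \<Rightarrow> 'b measure" where
  "kpow S K 0 = return S"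
| "kpow S K (Suc j) = (\<lambda>x. kpow S K j x \<bind> K)"

definition quanta_phase where
  "quanta_phase \<pi> m mufun Kfun \<beta> N n row_list =
     kseq (cfg_space N n) (map (\<lambda>i. swap_row_kernel \<pi> m mufun Kfun \<beta> N n i) row_list)"

text \<open>P2: phase 1 (centres from C1, moves on row_list of C2), then phase 2 (roles reversed).\<close>
definition quanta_P2 where
  "quanta_P2 \<pi> m mu1 K1 mu2 K2 \<beta> N n =
     (\<lambda>x. quanta_phase \<pi> m mu1 K1 \<beta> N n [N div 2 + 1 ..< N + 1] x
          \<bind> quanta_phase \<pi> m mu2 K2 \<beta> N n [1 ..< N div 2 + 1])"

end

theory Submission
  imports Defs
begin

lemma m_comp_meas:
  fixes f g :: "_ \<Rightarrow> 'a::euclidean_space"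
  assumes mm: "(\<lambda>p. m (fst p) (snd p)) \<in> borel_measurable borel"
    and f: "f \<in> borel_measurable M" and g: "g \<in> borel_measurable M"
  shows "(\<lambda>x. m (f x) (g x) :: real) \<in> borel_measurable M"
proof -
  have "(\<lambda>x. (f x, g x)) \<in> measurable M (borel \<Otimes>\<^sub>M borel)" using f g by (rule measurable_Pair)
  then have "(\<lambda>x. (f x, g x)) \<in> measurable M borel" by (simp add: borel_prod)
  from measurable_compose[OF this mm] show ?thesis by simp
qed

lemma nearest_meas:
  fixes mu :: "'b \<Rightarrow> nat \<Rightarrow> 'a::euclidean_space"
  assumes mm: "(\<lambda>p. m (fst p) (snd p)) \<in> borel_measurable borel"
    and mu: "\<And>h. (\<lambda>x. mu x h) \<in> borel_measurable M"
    and K: "K \<in> measurable M (count_space UNIV)"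
    and f: "f \<in> borel_measurable M"
  shows "(\<lambda>x. nearest m (mu x) (K x) (f x)) \<in> measurable M (count_space UNIV)"
  unfolding nearest_def
proof (rule measurable_Least)
  fix i
  have [measurable]: "\<And>h h'. Measurable.pred M (\<lambda>x. m (f x) (mu x h) \<le> m (f x) (mu x h'))"
  proof -
    fix h h'
    note [measurable] = m_comp_meas[OF mm f mu, of h] m_comp_meas[OF mm f mu, of h']
    show "Measurable.pred M (\<lambda>x. m (f x) (mu x h) \<le> m (f x) (mu x h'))" by measurable
  qed
  note K[measurable] 
  show "Measurable.pred M (\<lambda>x. i < K x \<and> (\<forall>h'<K x. m (f x) (mu x i) \<le> m (f x) (mu x h')))"
    by measurable
qed

lemma mu_nearest_meas:
  fixes mu :: "'b \<Rightarrow> nat \<Rightarrow> 'a::euclidean_space"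
  assumes mm: "(\<lambda>p. m (fst p) (snd p)) \<in> borel_measurable borel"
    and mu: "\<And>h. (\<lambda>x. mu x h) \<in> borel_measurable M"
    and K: "K \<in> measurable M (count_space UNIV)"
    and f: "f \<in> borel_measurable M"
  shows "(\<lambda>x. mu x (nearest m (mu x) (K x) (f x))) \<in> borel_measurable M"
  by (rule measurable_compose_countable[where f="\<lambda>h x. mu x h", OF mu nearest_meas[OF mm mu K f]])

lemma gmap_meas:
  fixes mu :: "'b \<Rightarrow> nat \<Rightarrow> 'a::euclidean_space"
  assumes mm: "(\<lambda>p. m (fst p) (snd p)) \<in> borel_measurable borel"
    and mu: "\<And>h. (\<lambda>x. mu x h) \<in> borel_measurable M"
    and K: "K \<in> measurable M (count_space UNIV)"
    and f: "f \<in> borel_measurable M"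
  shows "(\<lambda>x. gmap m (mu x) (K x) (f x) a b) \<in> borel_measurable M"
  unfolding gmap_def Let_def
  using mu_nearest_meas[OF mm mu K f] f by measurable

lemma inA_meas:
  fixes mu :: "'b \<Rightarrow> nat \<Rightarrow> 'a::euclidean_space"
  assumes mm: "(\<lambda>p. m (fst p) (snd p)) \<in> borel_measurable borel"
    and mu: "\<And>h. (\<lambda>x. mu x h) \<in> borel_measurable M"
    and K: "K \<in> measurable M (count_space UNIV)"
    and f: "f \<in> borel_measurable M"
  shows "Measurable.pred M (\<lambda>x. inA m (mu x) (K x) a b (f x))"
proof -
  note [measurable] = nearest_meas[OF mm mu K f] nearest_meas[OF mm mu K gmap_meas[OF mm mu K f]]
  have eq: "\<And>x. inA m (mu x) (K x) a b (f x) \<longleftrightarrow> (\<exists>h. nearest m (mu x) (K x) (gmap m (mu x) (K x) (f x) a b) = h \<and> nearest m (mu x) (K x) (f x) = h)"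
    unfolding inA_def by auto
  show ?thesis unfolding eq by measurable
qed

lemma nearest_lt:
  assumes "1 \<le> K"
  shows "nearest m mu K x < K \<and> (\<forall>h'<K. m x (mu (nearest m mu K x)) \<le> m x (mu h'))"
proof -
  let ?f = "\<lambda>h. m x (mu h)"
  have "0 \<in> {..<K}" using assms by simp
  then have fin: "finite {..<K}" "{..<K} \<noteq> {}" by auto
  define h0 where "h0 = arg_min_on ?f {..<K}"
  have "h0 \<in> {..<K} \<and> \<not> (\<exists>y\<in>{..<K}. ?f y < ?f h0)"
    unfolding h0_def using arg_min_if_finite[OF fin, of ?f] by blast
  then have "h0 < K \<and> (\<forall>h'<K. ?f h0 \<le> ?f h')" by (auto simp: not_less)
  then show ?thesis unfolding nearest_def by (rule LeastI)
qed

lemma tt_one: "0 < a \<Longrightarrow> 0 < b \<Longrightarrow> (b/a) powr (1/2) * (a/b) powr (1/2) = (1::real)"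
  by (simp add: powr_mult[symmetric])

lemma gmap_on: "nearest m mu K u = h \<Longrightarrow> gmap m mu K u a b = (a/b) powr (1/2) *\<^sub>R (u - mu h) + mu h"
  by (simp add: gmap_def Let_def)

lemma pw_equiv:
  fixes mu :: "nat \<Rightarrow> 'a::euclidean_space"
  assumes a: "0 < a" and b: "0 < b"
    and w: "w = (a/b) powr (1/2) *\<^sub>R (u - mu h) + mu h"
  shows "(nearest m mu K u = h \<and> inA m mu K a b u) \<longleftrightarrow> (nearest m mu K w = h \<and> inA m mu K b a w)"
proof -
  have u: "u = (b/a) powr (1/2) *\<^sub>R (w - mu h) + mu h"
    using tt_one[OF a b] by (simp add: w scaleR_scaleR)
  show ?thesis
  proof
    assume A: "nearest m mu K u = h \<and> inA m mu K a b u"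
    then have "gmap m mu K u a b = w" using gmap_on w by metis
    with A have "nearest m mu K w = h" unfolding inA_def by simp
    moreover have "gmap m mu K w b a = u" using gmap_on[OF \<open>nearest m mu K w = h\<close>] u by metis
    ultimately show "nearest m mu K w = h \<and> inA m mu K b a w" using A unfolding inA_def by simp
  next
    assume A: "nearest m mu K w = h \<and> inA m mu K b a w"
    then have "gmap m mu K w b a = u" using gmap_on u by metis
    with A have "nearest m mu K u = h" unfolding inA_def by simp
    moreover have "gmap m mu K u a b = w" using gmap_on[OF \<open>nearest m mu K u = h\<close>] w by metis
    ultimately show "nearest m mu K u = h \<and> inA m mu K a b u" using A unfolding inA_def by simp
  qed
qed

lemma gmap_invol:
  fixes mu :: "nat \<Rightarrow> 'a::euclidean_space"
  assumes a: "0 < a" and b: "0 < b" and A: "inA m mu K a b u"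
  shows "inA m mu K b a (gmap m mu K u a b) \<and> gmap m mu K (gmap m mu K u a b) b a = u"
proof -
  define h where "h = nearest m mu K u"
  define w where "w = gmap m mu K u a b"
  have w': "w = (a/b) powr (1/2) *\<^sub>R (u - mu h) + mu h" unfolding w_def by (rule gmap_on) (simp add: h_def)
  from pw_equiv[where mu=mu and h=h and m=m and K=K, OF a b w'] A h_def have B: "nearest m mu K w = h" "inA m mu K b a w" by auto
  have u: "u = (b/a) powr (1/2) *\<^sub>R (w - mu h) + mu h"
    using tt_one[OF a b] by (simp add: w' scaleR_scaleR)
  have "gmap m mu K w b a = u" using gmap_on[OF B(1)] u by metis
  with B show ?thesis unfolding w_def by simp
qed

lemma affine_subst:
  fixes Psi :: "'a::euclidean_space \<Rightarrow> ennreal"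
  assumes Psi: "Psi \<in> borel_measurable borel" and t: "0 < t" and tt: "t * t' = 1"
  shows "(\<integral>\<^sup>+u. Psi (c + t *\<^sub>R u) \<partial>lborel) = ennreal (t' ^ DIM('a)) * (\<integral>\<^sup>+w. Psi w \<partial>lborel)"
proof -
  have t0: "t \<noteq> 0" using t by simp
  have "t' = 1/t" using t tt by (auto simp: field_simps)
  then have t'0: "0 \<le> t'" using t by simp
  have eq: "lborel = density (distr lborel borel (\<lambda>x. c + t *\<^sub>R x)) (\<lambda>_. ennreal (\<bar>t\<bar>^DIM('a)))"
    by (rule lborel_affine[OF t0])
  have "(\<integral>\<^sup>+w. Psi w \<partial>lborel) = (\<integral>\<^sup>+w. Psi w \<partial>density (distr lborel borel (\<lambda>x. c + t *\<^sub>R x)) (\<lambda>_. ennreal (\<bar>t\<bar>^DIM('a))))"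
    using arg_cong[where f="\<lambda>M. integral\<^sup>N M Psi", OF eq] .
  also have "\<dots> = (\<integral>\<^sup>+w. ennreal (\<bar>t\<bar>^DIM('a)) * Psi w \<partial>distr lborel borel (\<lambda>x. c + t *\<^sub>R x))"
    by (rule nn_integral_density) (use Psi in auto)
  also have "\<dots> = (\<integral>\<^sup>+x. ennreal (\<bar>t\<bar>^DIM('a)) * Psi (c + t *\<^sub>R x) \<partial>lborel)"
    by (rule nn_integral_distr) (use Psi in auto)
  also have "\<dots> = ennreal (t^DIM('a)) * (\<integral>\<^sup>+x. Psi (c + t *\<^sub>R x) \<partial>lborel)"
    using t by (subst nn_integral_cmult) (use Psi in auto)
  finally have *: "(\<integral>\<^sup>+w. Psi w \<partial>lborel) = ennreal (t^DIM('a)) * (\<integral>\<^sup>+x. Psi (c + t *\<^sub>R x) \<partial>lborel)" .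
  have "ennreal (t' ^ DIM('a)) * (\<integral>\<^sup>+w. Psi w \<partial>lborel) = ennreal (t' ^ DIM('a) * t^DIM('a)) * (\<integral>\<^sup>+x. Psi (c + t *\<^sub>R x) \<partial>lborel)"
    unfolding * using t t'0 by (simp add: ennreal_mult mult.assoc)
  also have "t' ^ DIM('a) * t^DIM('a) = 1" using tt by (simp add: power_mult_distrib[symmetric] mult.commute)
  finally show ?thesis by simp
qed

lemma nearest_meas_c:
  fixes mu :: "nat \<Rightarrow> 'a::euclidean_space"
  assumes mm: "(\<lambda>p. m (fst p) (snd p)) \<in> borel_measurable borel"
  shows "nearest m mu K \<in> measurable borel (count_space UNIV)"
proof -
  have "(\<lambda>x. nearest m ((\<lambda>_. mu) x) ((\<lambda>_. K) x) ((\<lambda>x. x) x)) \<in> measurable borel (count_space UNIV)"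
    by (rule nearest_meas[OF mm]) auto
  then show ?thesis by simp
qed
lemma gmap_meas_c:
  fixes mu :: "nat \<Rightarrow> 'a::euclidean_space"
  assumes mm: "(\<lambda>p. m (fst p) (snd p)) \<in> borel_measurable borel"
  shows "(\<lambda>u. gmap m mu K u c d) \<in> borel_measurable borel"
proof -
  have "(\<lambda>x. gmap m ((\<lambda>_. mu) x) ((\<lambda>_. K) x) ((\<lambda>x. x) x) c d) \<in> borel_measurable borel"
    by (rule gmap_meas[OF mm]) auto
  then show ?thesis by simp
qed
lemma inA_meas_c:
  fixes mu :: "nat \<Rightarrow> 'a::euclidean_space"
  assumes mm: "(\<lambda>p. m (fst p) (snd p)) \<in> borel_measurable borel"
  shows "Measurable.pred borel (\<lambda>u. inA m mu K c d u)"
proof -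
  have "Measurable.pred borel (\<lambda>x. inA m ((\<lambda>_. mu) x) ((\<lambda>_. K) x) c d ((\<lambda>x. x) x))"
    by (rule inA_meas[OF mm]) auto
  then show ?thesis by simp
qed

lemma L1:
  fixes mu :: "nat \<Rightarrow> 'a::euclidean_space" and G :: "'a \<Rightarrow> ennreal"
  assumes mm: "(\<lambda>p. m (fst p) (snd p)) \<in> borel_measurable borel"
    and K: "1 \<le> K" and a: "0 < a" and b: "0 < b"
    and G: "G \<in> borel_measurable borel"
  shows "(\<integral>\<^sup>+u. indicator {u. inA m mu K a b u} u * G (gmap m mu K u a b) \<partial>lborel)
       = ennreal (((b/a) powr (1/2))^DIM('a)) * (\<integral>\<^sup>+w. indicator {w. inA m mu K b a w} w * G w \<partial>lborel)"
proof -
  define t where "t = (a/b) powr (1/2)"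
  define t' where "t' = (b/a) powr (1/2)"
  have t: "0 < t" using a b by (simp add: t_def)
  have tt: "t * t' = 1" unfolding t_def t'_def using tt_one[OF a b] by (simp add: mult.commute)
  let ?Z = "nearest m mu K"
  have Zm[measurable]: "?Z \<in> measurable borel (count_space UNIV)"
    by (rule nearest_meas_c[OF mm])
  have gm[measurable]: "(\<lambda>u. gmap m mu K u c d) \<in> borel_measurable borel" for c d
    by (rule gmap_meas_c[OF mm])
  have Am[measurable]: "Measurable.pred borel (\<lambda>u. inA m mu K c d u)" for c d
    by (rule inA_meas_c[OF mm])
  note G[measurable]
  have Zlt: "?Z u < K" for u by (rule conjunct1[OF nearest_lt[OF K]])
  have split1: "indicator {u. inA m mu K a b u} u * G (gmap m mu K u a b)
      = (\<Sum>h<K. indicator {u. ?Z u = h \<and> inA m mu K a b u} u * G (mu h - t *\<^sub>R mu h + t *\<^sub>R u))" for u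
  proof -
    have "(\<Sum>h<K. indicator {u. ?Z u = h \<and> inA m mu K a b u} u * G (mu h - t *\<^sub>R mu h + t *\<^sub>R u))
        = (\<Sum>h<K. if h = ?Z u then indicator {u. inA m mu K a b u} u * G (mu h - t *\<^sub>R mu h + t *\<^sub>R u) else 0)"
      by (intro sum.cong) (auto split: split_indicator)
    also have "\<dots> = indicator {u. inA m mu K a b u} u * G (mu (?Z u) - t *\<^sub>R mu (?Z u) + t *\<^sub>R u)"
      using Zlt[of u] by (simp add: sum.delta')
    also have "mu (?Z u) - t *\<^sub>R mu (?Z u) + t *\<^sub>R u = gmap m mu K u a b"
      by (simp add: gmap_def Let_def t_def scaleR_diff_right)
    finally show ?thesis by simp
  qed
  have split2: "indicator {w. inA m mu K b a w} w * G w
      = (\<Sum>h<K. indicator {w. ?Z w = h \<and> inA m mu K b a w} w * G w)" for w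
  proof -
    have "(\<Sum>h<K. indicator {w. ?Z w = h \<and> inA m mu K b a w} w * G w)
        = (\<Sum>h<K. if h = ?Z w then indicator {w. inA m mu K b a w} w * G w else 0)"
      by (intro sum.cong) (auto split: split_indicator)
    also have "\<dots> = indicator {w. inA m mu K b a w} w * G w"
      using Zlt[of w] by (simp add: sum.delta')
    finally show ?thesis by simp
  qed
  have piece: "(\<integral>\<^sup>+u. indicator {u. ?Z u = h \<and> inA m mu K a b u} u * G (mu h - t *\<^sub>R mu h + t *\<^sub>R u) \<partial>lborel)
      = ennreal (t' ^ DIM('a)) * (\<integral>\<^sup>+w. indicator {w. ?Z w = h \<and> inA m mu K b a w} w * G w \<partial>lborel)" for h
  proof -
    define Psi where "Psi w = indicator {w. ?Z w = h \<and> inA m mu K b a w} w * G w" for w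
    have Psim: "Psi \<in> borel_measurable borel" unfolding Psi_def by measurable
    have "indicator {u. ?Z u = h \<and> inA m mu K a b u} u * G (mu h - t *\<^sub>R mu h + t *\<^sub>R u)
        = Psi ((mu h - t *\<^sub>R mu h) + t *\<^sub>R u)" for u
    proof -
      have w: "(mu h - t *\<^sub>R mu h) + t *\<^sub>R u = (a/b) powr (1/2) *\<^sub>R (u - mu h) + mu h"
        by (simp add: t_def scaleR_diff_right)
      show ?thesis unfolding Psi_def using pw_equiv[where mu=mu and h=h and m=m and K=K, OF a b w]
        by (simp add: indicator_def)
    qed
    then have "(\<integral>\<^sup>+u. indicator {u. ?Z u = h \<and> inA m mu K a b u} u * G (mu h - t *\<^sub>R mu h + t *\<^sub>R u) \<partial>lborel)
        = (\<integral>\<^sup>+u. Psi ((mu h - t *\<^sub>R mu h) + t *\<^sub>R u) \<partial>lborel)" by simp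
    also have "\<dots> = ennreal (t' ^ DIM('a)) * (\<integral>\<^sup>+w. Psi w \<partial>lborel)"
      by (rule affine_subst[OF Psim t tt])
    finally show ?thesis unfolding Psi_def .
  qed
  have "(\<integral>\<^sup>+u. indicator {u. inA m mu K a b u} u * G (gmap m mu K u a b) \<partial>lborel)
      = (\<integral>\<^sup>+u. (\<Sum>h<K. indicator {u. ?Z u = h \<and> inA m mu K a b u} u * G (mu h - t *\<^sub>R mu h + t *\<^sub>R u)) \<partial>lborel)"
    by (simp only: split1)
  also have "\<dots> = (\<Sum>h<K. (\<integral>\<^sup>+u. indicator {u. ?Z u = h \<and> inA m mu K a b u} u * G (mu h - t *\<^sub>R mu h + t *\<^sub>R u) \<partial>lborel))"
    by (rule nn_integral_sum) measurable
  also have "\<dots> = (\<Sum>h<K. ennreal (t' ^ DIM('a)) * (\<integral>\<^sup>+w. indicator {w. ?Z w = h \<and> inA m mu K b a w} w * G w \<partial>lborel))"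
    by (simp only: piece)
  also have "\<dots> = ennreal (t' ^ DIM('a)) * (\<Sum>h<K. (\<integral>\<^sup>+w. indicator {w. ?Z w = h \<and> inA m mu K b a w} w * G w \<partial>lborel))"
    by (simp add: sum_distrib_left)
  also have "(\<Sum>h<K. (\<integral>\<^sup>+w. indicator {w. ?Z w = h \<and> inA m mu K b a w} w * G w \<partial>lborel))
      = (\<integral>\<^sup>+w. (\<Sum>h<K. indicator {w. ?Z w = h \<and> inA m mu K b a w} w * G w) \<partial>lborel)"
    by (rule nn_integral_sum[symmetric]) measurable
  also have "\<dots> = (\<integral>\<^sup>+w. indicator {w. inA m mu K b a w} w * G w \<partial>lborel)"
    by (simp only: split2)
  finally show ?thesis by (simp add: t'_def)
qed

lemma L_iter:
  fixes f :: "('i \<Rightarrow> 'a::euclidean_space) \<Rightarrow> ennreal"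
  assumes I: "finite I" "p \<in> I" "q \<in> I" "p \<noteq> q"
    and f: "f \<in> borel_measurable (PiM I (\<lambda>_. lborel))"
  shows "integral\<^sup>N (PiM I (\<lambda>_. lborel)) f
     = (\<integral>\<^sup>+x. \<integral>\<^sup>+v. \<integral>\<^sup>+u. f (x(q:=v, p:=u)) \<partial>lborel \<partial>lborel \<partial>PiM (I - {p} - {q}) (\<lambda>_. lborel))"
proof -
  interpret product_sigma_finite "\<lambda>_. lborel :: 'a measure" by standard
  have I1: "I = insert p (I - {p})" using I by auto
  have I2: "I - {p} = insert q (I - {p} - {q})" using I by auto
  have f1: "f \<in> borel_measurable (PiM (insert p (I - {p})) (\<lambda>_. lborel))" using f I1 by simp
  have "integral\<^sup>N (PiM I (\<lambda>_. lborel)) f = integral\<^sup>N (PiM (insert p (I - {p})) (\<lambda>_. lborel)) f"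
    using I1 by simp
  also have "\<dots> = (\<integral>\<^sup>+ x. (\<integral>\<^sup>+ u. f (x(p := u)) \<partial>lborel) \<partial>(PiM (I - {p}) (\<lambda>_. lborel)))"
    by (rule product_nn_integral_insert) (use I f1 in auto)
  also have "\<dots> = (\<integral>\<^sup>+ x. (\<integral>\<^sup>+ u. f (x(p := u)) \<partial>lborel) \<partial>(PiM (insert q (I - {p} - {q})) (\<lambda>_. lborel)))"
    using I2 by simp
  also have "\<dots> = (\<integral>\<^sup>+ x. \<integral>\<^sup>+ v. (\<integral>\<^sup>+ u. f (x(q := v, p := u)) \<partial>lborel) \<partial>lborel \<partial>(PiM (I - {p} - {q}) (\<lambda>_. lborel)))"
  proof (rule product_nn_integral_insert)
    show "finite (I - {p} - {q})" using I by simp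
    show "q \<notin> I - {p} - {q}" by simp
    have "(\<lambda>(x, u). f (x(p := u))) \<in> borel_measurable (PiM (I - {p}) (\<lambda>_. lborel) \<Otimes>\<^sub>M lborel)"
      using measurable_compose[OF measurable_add_dim f1] by (simp add: case_prod_unfold)
    then show "(\<lambda>x. \<integral>\<^sup>+ u. f (x(p := u)) \<partial>lborel) \<in> borel_measurable (PiM (insert q (I - {p} - {q})) (\<lambda>_. lborel))"
      unfolding I2[symmetric] by (rule lborel.borel_measurable_nn_integral)
  qed
  finally show ?thesis .
qed

lemma upd2_meas:
  fixes h :: "'b \<Rightarrow> ('i \<Rightarrow> 'a::euclidean_space)"
  assumes h: "h \<in> measurable N (PiM I (\<lambda>_. lborel))" and pq: "p \<in> I" "q \<in> I"
    and f: "f \<in> borel_measurable N" and g: "g \<in> borel_measurable N"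
  shows "(\<lambda>w. (h w)(p := f w, q := g w)) \<in> measurable N (PiM I (\<lambda>_. lborel))"
proof (rule measurable_PiM_single')
  fix j assume j: "j \<in> I"
  have hj: "(\<lambda>w. h w j) \<in> borel_measurable N"
    using measurable_compose[OF h measurable_component_singleton[OF j]] by simp
  show "(\<lambda>w. ((h w)(p := f w, q := g w)) j) \<in> measurable N lborel"
    using f g hj by (cases "j = q"; cases "j = p") simp_all
next
  show "(\<lambda>w j. ((h w)(p := f w, q := g w)) j) \<in> space N \<rightarrow> (\<Pi>\<^sub>E j\<in>I. space lborel)"
    using measurable_space[OF h] pq by (auto simp: space_PiM PiE_def extensional_def)
qed

locale qrow =
  fixes \<pi> :: "'a::euclidean_space \<Rightarrow> real" and m :: "'a \<Rightarrow> 'a \<Rightarrow> real" and \<beta> :: "nat \<Rightarrow> real"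
    and N n :: nat
    and mufun :: "(nat \<times> nat \<Rightarrow> 'a) \<Rightarrow> nat \<Rightarrow> 'a" and Kfun :: "(nat \<times> nat \<Rightarrow> 'a) \<Rightarrow> nat" and i :: nat
  assumes pi_meas: "\<pi> \<in> borel_measurable borel"
    and pi_nonneg: "\<And>x. 0 \<le> \<pi> x"
    and mm: "(\<lambda>p. m (fst p) (snd p)) \<in> borel_measurable borel"
    and beta_pos: "\<And>j. j \<le> n \<Longrightarrow> 0 < \<beta> j"
    and n_pos: "1 \<le> n"
    and i_rng: "1 \<le> i" "i \<le> N"
    and mu_meas: "\<And>h. (\<lambda>x. mufun x h) \<in> borel_measurable (cfg_space N n)"
    and K_meas: "Kfun \<in> measurable (cfg_space N n) (count_space UNIV)"
    and K_pos: "\<And>x. x \<in> space (cfg_space N n) \<Longrightarrow> 1 \<le> Kfun x"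
    and mu_inv: "\<And>x l u v. x \<in> space (cfg_space N n) \<Longrightarrow> l < n \<Longrightarrow>
       mufun (x((i,l):=u, (i,Suc l):=v)) = mufun x \<and> Kfun (x((i,l):=u, (i,Suc l):=v)) = Kfun x"
begin

abbreviation M :: "(nat \<times> nat \<Rightarrow> 'a) measure" where "M \<equiv> cfg_space N n"
definition "Sw l x = swap_prop m (mufun x) (Kfun x) \<beta> i l x"
definition "Ix l x \<longleftrightarrow> inA m (mufun x) (Kfun x) (\<beta> l) (\<beta> (Suc l)) (x (i,l))
                     \<and> inA m (mufun x) (Kfun x) (\<beta> (Suc l)) (\<beta> l) (x (i, Suc l))"

lemma M_def': "M = PiM (cfg_index N n) (\<lambda>_. lborel)" by (simp add: cfg_space_def)

lemma pq_in: "l < n \<Longrightarrow> (i,l) \<in> cfg_index N n \<and> (i, Suc l) \<in> cfg_index N n"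
  using i_rng by (auto simp: cfg_index_def)

lemma fin_idx: "finite (cfg_index N n)" by (simp add: cfg_index_def)

lemma comp_meas: "j \<in> cfg_index N n \<Longrightarrow> (\<lambda>x. x j) \<in> borel_measurable M"
  unfolding M_def' using measurable_component_singleton[of j "cfg_index N n" "\<lambda>_. lborel"] by simp

lemma gm_meas: "j \<in> cfg_index N n \<Longrightarrow> (\<lambda>x. gmap m (mufun x) (Kfun x) (x j) a b) \<in> borel_measurable M"
  by (rule gmap_meas[OF mm mu_meas K_meas comp_meas])

lemma Sw_meas: "l < n \<Longrightarrow> Sw l \<in> measurable M M"
proof -
  assume l: "l < n"
  have "(\<lambda>x. (id x)((i, Suc l) := gmap m (mufun x) (Kfun x) (x (i,l)) (\<beta> l) (\<beta> (Suc l)),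
             (i,l) := gmap m (mufun x) (Kfun x) (x (i,Suc l)) (\<beta> (Suc l)) (\<beta> l))) \<in> measurable M (PiM (cfg_index N n) (\<lambda>_. lborel))"
    by (rule upd2_meas) (use pq_in[OF l] gm_meas in \<open>auto simp: cfg_space_def\<close>)
  then show ?thesis unfolding Sw_def swap_prop_def M_def' by simp
qed

lemma Ix_meas: "l < n \<Longrightarrow> Measurable.pred M (Ix l)"
proof -
  assume l: "l < n"
  note [measurable] = inA_meas[OF mm mu_meas K_meas comp_meas[OF conjunct1[OF pq_in[OF l]]]]
     inA_meas[OF mm mu_meas K_meas comp_meas[OF conjunct2[OF pq_in[OF l]]]]
  show ?thesis unfolding Ix_def[abs_def] by measurable
qed

end

context qrow begin

lemma transfer:
  assumes l: "l < n" and F: "F \<in> borel_measurable M"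
  shows "(\<integral>\<^sup>+x. indicator {x. Ix l x} x * F (Sw l x) \<partial>M) = (\<integral>\<^sup>+x. indicator {x. Ix l x} x * F x \<partial>M)"
proof -
  define p where "p = (i,l)"
  define q where "q = (i, Suc l)"
  define a where "a = \<beta> l"
  define b where "b = \<beta> (Suc l)"
  have pq: "p \<in> cfg_index N n" "q \<in> cfg_index N n" "p \<noteq> q"
    using pq_in[OF l] by (auto simp: p_def q_def)
  have ab: "0 < a" "0 < b" using beta_pos l by (auto simp: a_def b_def)
  define J where "J = cfg_index N n - {p} - {q}"
  note Sw_meas[OF l, measurable] Ix_meas[OF l, measurable] F[measurable]
  define LHSf where "LHSf x = indicator {x. Ix l x} x * F (Sw l x)" for x
  define RHSf where "RHSf x = indicator {x. Ix l x} x * F x" for x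
  have LHSm: "LHSf \<in> borel_measurable M" unfolding LHSf_def by measurable
  have RHSm: "RHSf \<in> borel_measurable M" unfolding RHSf_def by measurable
  have iterL: "integral\<^sup>N M LHSf = (\<integral>\<^sup>+x. \<integral>\<^sup>+v. \<integral>\<^sup>+u. LHSf (x(q:=v, p:=u)) \<partial>lborel \<partial>lborel \<partial>PiM J (\<lambda>_. lborel))"
    unfolding M_def' J_def by (rule L_iter[OF fin_idx pq]) (use LHSm in \<open>simp add: M_def'\<close>)
  have J': "cfg_index N n - {q} - {p} = J" unfolding J_def by auto
  have iterR: "integral\<^sup>N M RHSf = (\<integral>\<^sup>+x. \<integral>\<^sup>+u. \<integral>\<^sup>+v. RHSf (x(p:=u, q:=v)) \<partial>lborel \<partial>lborel \<partial>PiM J (\<lambda>_. lborel))"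
    unfolding M_def' J'[symmetric] by (rule L_iter[OF fin_idx pq(2) pq(1) pq(3)[symmetric]]) (use RHSm in \<open>simp add: M_def'\<close>)
  have inner: "(\<integral>\<^sup>+v. \<integral>\<^sup>+u. LHSf (x(q:=v, p:=u)) \<partial>lborel \<partial>lborel) = (\<integral>\<^sup>+u. \<integral>\<^sup>+v. RHSf (x(p:=u, q:=v)) \<partial>lborel \<partial>lborel)"
    if x: "x \<in> space (PiM J (\<lambda>_. lborel))" for x
  proof -
    define x0 where "x0 = x(p := 0, q := 0)"
    have x0: "x0 \<in> space M"
      using x pq unfolding x0_def M_def' J_def by (auto simp: space_PiM PiE_def extensional_def)
    define mu where "mu = mufun x0"
    define K where "K = Kfun x0"
    have K1: "1 \<le> K" unfolding K_def by (rule K_pos[OF x0])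
    have upd: "x(q:=v, p:=u) = x0(p:=u, q:=v)" for u v
      using pq(3) by (intro ext) (simp add: x0_def)
    have upd': "x(q:=v, p:=u) = x0(q:=v, p:=u)" for u v
      using pq(3) by (intro ext) (simp add: x0_def)
    have swp: "x(p:=u, q:=v) = x(q:=v, p:=u)" for u v
      using pq(3) by (intro ext) simp
    have inv: "mufun (x(q:=v, p:=u)) = mu \<and> Kfun (x(q:=v, p:=u)) = K" for u v
      using mu_inv[OF x0 l, of u v] upd[of v u] unfolding mu_def K_def p_def q_def by simp
    have SwE: "Sw l (x(q:=v, p:=u)) = x(q := gmap m mu K u a b, p := gmap m mu K v b a)" for u v
      using inv[of v u] pq(3) unfolding Sw_def swap_prop_def
      by (intro ext) (simp add: p_def q_def a_def b_def)
    have IxE: "Ix l (x(q:=v, p:=u)) \<longleftrightarrow> inA m mu K a b u \<and> inA m mu K b a v" for u v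
      using inv[of v u] pq(3) unfolding Ix_def by (simp add: p_def q_def a_def b_def)
    have updm: "(\<lambda>w. x(q := f w, p := g w)) \<in> measurable N' M"
      if "f \<in> borel_measurable N'" "g \<in> borel_measurable N'" for f g and N' :: "'c measure"
    proof -
      have "(\<lambda>w. ((\<lambda>_. x0) w)(q := f w, p := g w)) \<in> measurable N' (PiM (cfg_index N n) (\<lambda>_. lborel))"
        by (rule upd2_meas) (use x0 that pq in \<open>auto simp: M_def'\<close>)
      then show ?thesis using upd' by (simp add: M_def')
    qed
    have Am[measurable]: "Measurable.pred borel (\<lambda>u. inA m mu K c d u)" for c d by (rule inA_meas_c[OF mm])
    have gm[measurable]: "(\<lambda>u. gmap m mu K u c d) \<in> borel_measurable borel" for c d by (rule gmap_meas_c[OF mm])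
    have Fz[measurable]: "(\<lambda>w. F (x(q := f w, p := g w))) \<in> borel_measurable N'"
      if "f \<in> borel_measurable N'" "g \<in> borel_measurable N'" for f g and N' :: "'c measure"
      using measurable_compose[OF updm[OF that] F] .
    define Phi where "Phi y = (\<integral>\<^sup>+z. indicator {z. inA m mu K b a z} z * F (x(q := z, p := y)) \<partial>lborel)" for y
    have Phim[measurable]: "Phi \<in> borel_measurable borel"
    proof -
      have "(\<lambda>(y,z). indicator {z. inA m mu K b a z} z * F (x(q := z, p := y))) \<in> borel_measurable (borel \<Otimes>\<^sub>M lborel)"
      proof -
        have "(\<lambda>w. F (x(q := snd w, p := fst w))) \<in> borel_measurable (borel \<Otimes>\<^sub>M lborel)"
          by (rule Fz) measurable
        then show ?thesis by (simp add: case_prod_unfold) measurable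
      qed
      then show ?thesis unfolding Phi_def by (rule lborel.borel_measurable_nn_integral)
    qed
    define c1 where "c1 = ennreal (((b/a) powr (1/2))^DIM('a))"
    define c2 where "c2 = ennreal (((a/b) powr (1/2))^DIM('a))"
    have c12: "c1 * c2 = 1"
      unfolding c1_def c2_def using tt_one[OF ab]
      by (simp add: ennreal_mult''[symmetric] power_mult_distrib[symmetric])
    have "(\<integral>\<^sup>+v. \<integral>\<^sup>+u. LHSf (x(q:=v, p:=u)) \<partial>lborel \<partial>lborel)
        = (\<integral>\<^sup>+v. \<integral>\<^sup>+u. indicator {v. inA m mu K b a v} v * (indicator {u. inA m mu K a b u} u * F (x(q := gmap m mu K u a b, p := gmap m mu K v b a))) \<partial>lborel \<partial>lborel)"
      unfolding LHSf_def SwE IxE by (intro nn_integral_cong) (simp add: IxE split: split_indicator)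
    also have "\<dots> = (\<integral>\<^sup>+v. indicator {v. inA m mu K b a v} v * (\<integral>\<^sup>+u. indicator {u. inA m mu K a b u} u * F (x(q := gmap m mu K u a b, p := gmap m mu K v b a)) \<partial>lborel) \<partial>lborel)"
      by (intro nn_integral_cong nn_integral_cmult) measurable
    also have "\<dots> = (\<integral>\<^sup>+v. indicator {v. inA m mu K b a v} v * (c1 * Phi (gmap m mu K v b a)) \<partial>lborel)"
    proof (intro nn_integral_cong arg_cong2[where f="(*)"] refl)
      fix v
      show "(\<integral>\<^sup>+u. indicator {u. inA m mu K a b u} u * F (x(q := gmap m mu K u a b, p := gmap m mu K v b a)) \<partial>lborel) = c1 * Phi (gmap m mu K v b a)"
        unfolding c1_def Phi_def
        by (rule L1[OF mm K1 ab, where G="\<lambda>z. F (x(q := z, p := gmap m mu K v b a))"]) measurable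
    qed
    also have "\<dots> = c1 * (\<integral>\<^sup>+v. indicator {v. inA m mu K b a v} v * Phi (gmap m mu K v b a) \<partial>lborel)"
      by (subst nn_integral_cmult[symmetric]) (measurable, simp add: mult_ac)
    also have "\<dots> = c1 * (c2 * (\<integral>\<^sup>+y. indicator {y. inA m mu K a b y} y * Phi y \<partial>lborel))"
      unfolding c2_def by (subst L1[OF mm K1 ab(2) ab(1)]) (simp_all add: Phim)
    also have "\<dots> = (\<integral>\<^sup>+y. indicator {y. inA m mu K a b y} y * Phi y \<partial>lborel)"
      by (simp add: mult.assoc[symmetric] c12)
    also have "\<dots> = (\<integral>\<^sup>+u. \<integral>\<^sup>+v. RHSf (x(p:=u, q:=v)) \<partial>lborel \<partial>lborel)"
    proof (intro nn_integral_cong)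
      fix u
      have "(\<integral>\<^sup>+v. RHSf (x(p:=u, q:=v)) \<partial>lborel) = (\<integral>\<^sup>+v. indicator {y. inA m mu K a b y} u * (indicator {z. inA m mu K b a z} v * F (x(q := v, p := u))) \<partial>lborel)"
        unfolding RHSf_def swp IxE by (intro nn_integral_cong) (simp add: IxE split: split_indicator)
      also have "\<dots> = indicator {y. inA m mu K a b y} u * Phi u"
        unfolding Phi_def by (rule nn_integral_cmult) measurable
      finally show "indicator {y. inA m mu K a b y} u * Phi u = (\<integral>\<^sup>+v. RHSf (x(p:=u, q:=v)) \<partial>lborel)" by simp
    qed
    finally show ?thesis .
  qed
  have "integral\<^sup>N M LHSf = integral\<^sup>N M RHSf"
    unfolding iterL iterR by (intro nn_integral_cong inner)
  then show ?thesis unfolding LHSf_def RHSf_def .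
qed

end

lemma distr_id_emeasure:
  assumes A: "A \<in> sets N"
  shows "emeasure (distr (measure_pmf P) N (\<lambda>y. y)) A = emeasure (measure_pmf P) A"
proof -
  have "emeasure (distr (measure_pmf P) N (\<lambda>y. y)) A
      = (\<lambda>A. emeasure (measure_pmf P) ((\<lambda>y. y) -` A \<inter> space (measure_pmf P))) A"
    unfolding distr_def
  proof (rule emeasure_measure_of_sigma)
    show "sigma_algebra (space N) (sets N)" by (rule sets.sigma_algebra_axioms)
    show "positive (sets N) (\<lambda>A. emeasure (measure_pmf P) ((\<lambda>y. y) -` A \<inter> space (measure_pmf P)))"
      by (simp add: positive_def)
    show "countably_additive (sets N) (\<lambda>A. emeasure (measure_pmf P) ((\<lambda>y. y) -` A \<inter> space (measure_pmf P)))"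
      using emeasure_countably_additive[of "measure_pmf P"] by (simp add: countably_additive_def)
    show "A \<in> sets N" by fact
  qed
  then show ?thesis by simp
qed

lemma db_real:
  fixes D Nn R :: real
  assumes "0 \<le> D" "0 \<le> Nn" "0 \<le> R"
  shows "D * R * min 1 (Nn / D) = min (D * R) (Nn * R)"
proof (cases "D = 0")
  case True then show ?thesis using assms by simp
next
  case False
  then have "D * min 1 (Nn / D) = min D Nn" using assms by (simp add: min_def field_simps)
  then have "D * R * min 1 (Nn / D) = min D Nn * R" by (metis mult.commute mult.left_commute)
  also have "\<dots> = min (D * R) (Nn * R)" using assms by (simp add: min_mult_distrib_right)
  finally show ?thesis .
qed

context qrow begin

definition "acc l x = swap_acc \<pi> m (mufun x) (Kfun x) \<beta> i l x"
definition "uu x = unnorm_piQ \<pi> \<beta> N n x"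

lemma Sw_space: "x \<in> space M \<Longrightarrow> l < n \<Longrightarrow> Sw l x \<in> space M"
  using measurable_space[OF Sw_meas] by blast

lemma Sw_inv: assumes x: "x \<in> space M" and l: "l < n"
  shows "mufun (Sw l x) = mufun x \<and> Kfun (Sw l x) = Kfun x"
proof -
  have "Sw l x = x((i,l) := gmap m (mufun x) (Kfun x) (x (i,Suc l)) (\<beta> (Suc l)) (\<beta> l),
                  (i,Suc l) := gmap m (mufun x) (Kfun x) (x (i,l)) (\<beta> l) (\<beta> (Suc l)))"
    unfolding Sw_def swap_prop_def by (intro ext) simp
  then show ?thesis using mu_inv[OF x l] by simp
qed

lemma Sw_invol: assumes x: "x \<in> space M" and l: "l < n" and I: "Ix l x"
  shows "Ix l (Sw l x) \<and> Sw l (Sw l x) = x"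
proof -
  have ab: "0 < \<beta> l" "0 < \<beta> (Suc l)" using beta_pos l by auto
  note inv1 = conjunct1[OF Sw_inv[OF x l]] and inv2 = conjunct2[OF Sw_inv[OF x l]]
  let ?mu = "mufun x" and ?K = "Kfun x"
  have A1: "inA m ?mu ?K (\<beta> l) (\<beta> (Suc l)) (x (i,l))" and A2: "inA m ?mu ?K (\<beta> (Suc l)) (\<beta> l) (x (i,Suc l))"
    using I unfolding Ix_def by auto
  note G1 = gmap_invol[OF ab A1] and G2 = gmap_invol[OF ab(2) ab(1) A2]
  have SwE: "Sw l x = x((i, Suc l) := gmap m ?mu ?K (x (i, l)) (\<beta> l) (\<beta> (Suc l)),
          (i, l) := gmap m ?mu ?K (x (i, Suc l)) (\<beta> (Suc l)) (\<beta> l))"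
    unfolding Sw_def swap_prop_def ..
  have "Ix l (Sw l x)" unfolding Ix_def inv1 inv2 using G1 G2 by (simp add: SwE)
  moreover have "Sw l (Sw l x) = x"
    unfolding Sw_def[of l "Sw l x"] swap_prop_def inv1 inv2 using G1 G2
    by (intro ext) (simp add: SwE)
  ultimately show ?thesis by simp
qed

lemma acc_nonneg: "0 \<le> acc l x"
  unfolding acc_def swap_acc_def using pi_nonneg by (simp add: divide_nonneg_nonneg)

lemma acc_le1: "acc l x \<le> 1"
  unfolding acc_def swap_acc_def by simp

lemma uu_nonneg: "0 \<le> uu x"
  unfolding uu_def unnorm_piQ_def using pi_nonneg by (simp add: prod_nonneg)

lemma DB: assumes x: "x \<in> space M" and l: "l < n"
  shows "uu x * acc l x = (if Ix l x then min (uu x) (uu (Sw l x)) else 0)"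
proof -
  define p where "p = (i,l)"
  define q where "q = (i, Suc l)"
  have pq: "p \<in> cfg_index N n" "q \<in> cfg_index N n" "p \<noteq> q"
    using pq_in[OF l] by (auto simp: p_def q_def)
  define f :: "(nat \<times> nat \<Rightarrow> 'a) \<Rightarrow> nat \<times> nat \<Rightarrow> real" where "f y r = \<pi> (y r) powr \<beta> (snd r)" for y r
  define R where "R y = (\<Prod>r\<in>cfg_index N n - {p} - {q}. f y r)" for y
  have split: "uu y = f y p * f y q * R y" for y
  proof -
    have "uu y = (\<Prod>r\<in>cfg_index N n. f y r)" unfolding uu_def unnorm_piQ_def f_def ..
    also have "\<dots> = f y p * (\<Prod>r\<in>cfg_index N n - {p}. f y r)"
      by (rule prod.remove[OF fin_idx pq(1)])
    also have "(\<Prod>r\<in>cfg_index N n - {p}. f y r) = f y q * R y"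
      unfolding R_def by (rule prod.remove) (use fin_idx pq in auto)
    finally show ?thesis by (simp add: mult.assoc)
  qed
  have SwE: "Sw l x = x(q := gmap m (mufun x) (Kfun x) (x p) (\<beta> l) (\<beta> (Suc l)),
          p := gmap m (mufun x) (Kfun x) (x q) (\<beta> (Suc l)) (\<beta> l))"
    unfolding Sw_def swap_prop_def p_def q_def ..
  have RS: "R (Sw l x) = R x" unfolding R_def f_def SwE by (intro prod.cong) auto
  define D where "D = f x p * f x q"
  define Nn where "Nn = f (Sw l x) p * f (Sw l x) q"
  have D0: "0 \<le> D" and N0: "0 \<le> Nn" and R0: "0 \<le> R x"
    unfolding D_def Nn_def R_def f_def using pi_nonneg by (auto intro!: prod_nonneg)
  have accE: "acc l x = min 1 (Nn / D * (if Ix l x then 1 else 0))"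
    unfolding acc_def swap_acc_def D_def Nn_def Ix_def f_def SwE using pq(3)
    by (simp add: p_def q_def mult.commute)
  show ?thesis
  proof (cases "Ix l x")
    case True
    have "uu x * acc l x = D * R x * min 1 (Nn / D)" using True by (simp add: accE split D_def)
    also have "\<dots> = min (D * R x) (Nn * R x)" by (rule db_real[OF D0 N0 R0])
    also have "\<dots> = min (uu x) (uu (Sw l x))" by (simp add: split RS D_def Nn_def)
    finally show ?thesis using True by simp
  next
    case False then show ?thesis by (simp add: accE)
  qed
qed

end

context qrow begin

abbreviation "KK \<equiv> swap_row_kernel \<pi> m mufun Kfun \<beta> N n i"

lemma kern_em: assumes x: "x \<in> space M" and A: "A \<in> sets M"
  shows "emeasure (KK x) A = (\<Sum>l<n. indicator A (Sw l x) * ennreal (acc l x) + indicator A x * ennreal (1 - acc l x)) / of_nat n"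
proof -
  define P where "P = bind_pmf (pmf_of_set {..<n}) (\<lambda>l.
          map_pmf (\<lambda>b. if b then swap_prop m (mufun x) (Kfun x) \<beta> i l x else x)
            (bernoulli_pmf (swap_acc \<pi> m (mufun x) (Kfun x) \<beta> i l x)))"
  have "0 \<in> {..<n}" using n_pos by simp
  then have ne: "{..<n} \<noteq> {}" by blast
  have "emeasure (KK x) A = emeasure (measure_pmf P) A"
    unfolding swap_row_kernel_def P_def by (rule distr_id_emeasure[OF A])
  also have "\<dots> = (\<integral>\<^sup>+y. indicator A y \<partial>measure_pmf P)" by simp
  also have "\<dots> = (\<Sum>l<n. (\<integral>\<^sup>+y. indicator A y \<partial>measure_pmf (map_pmf (\<lambda>b. if b then Sw l x else x) (bernoulli_pmf (acc l x))))) / of_nat (card {..<n})"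
    unfolding P_def nn_integral_bind_pmf Sw_def[symmetric] acc_def[symmetric]
    by (rule nn_integral_pmf_of_set[OF ne]) simp
  also have "\<dots> = (\<Sum>l<n. indicator A (Sw l x) * ennreal (acc l x) + indicator A x * ennreal (1 - acc l x)) / of_nat n"
    using acc_nonneg acc_le1 by simp
  finally show ?thesis .
qed

lemma acc_meas: assumes l: "l < n" shows "acc l \<in> borel_measurable M"
proof -
  note pq = conjunct1[OF pq_in[OF l]] conjunct2[OF pq_in[OF l]]
  note [measurable] = gm_meas[OF pq(1)] gm_meas[OF pq(2)] comp_meas[OF pq(1)] comp_meas[OF pq(2)] pi_meas
    inA_meas[OF mm mu_meas K_meas comp_meas[OF pq(1)]] inA_meas[OF mm mu_meas K_meas comp_meas[OF pq(2)]]
  show ?thesis unfolding acc_def[abs_def] swap_acc_def by measurable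
qed

lemma uu_meas: "uu \<in> borel_measurable M"
  unfolding uu_def[abs_def] unnorm_piQ_def
proof (rule borel_measurable_prod)
  fix r assume r: "r \<in> cfg_index N n"
  note [measurable] = comp_meas[OF r] pi_meas
  show "(\<lambda>x. \<pi> (x r) powr \<beta> (snd r)) \<in> borel_measurable M" by measurable
qed

lemma space_M_ne: "space M \<noteq> {}"
  unfolding M_def' space_PiM by (simp add: PiE_eq_empty_iff)

lemma kern_meas: "KK \<in> measurable M (subprob_algebra M)"
proof (rule measurable_subprob_algebra)
  fix x assume x: "x \<in> space M"
  show "sets (KK x) = sets M" unfolding swap_row_kernel_def by simp
  show "subprob_space (KK x)"
  proof
    have "emeasure (KK x) (space (KK x)) = emeasure (measure_pmf (bind_pmf (pmf_of_set {..<n}) (\<lambda>l.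
          map_pmf (\<lambda>b. if b then swap_prop m (mufun x) (Kfun x) \<beta> i l x else x)
            (bernoulli_pmf (swap_acc \<pi> m (mufun x) (Kfun x) \<beta> i l x))))) (space M)"
      unfolding swap_row_kernel_def by (simp add: distr_id_emeasure)
    also have "\<dots> \<le> 1" by (rule subprob_space.subprob_emeasure_le_1[OF subprob_space_measure_pmf])
    finally show "emeasure (KK x) (space (KK x)) \<le> 1" .
    show "space (KK x) \<noteq> {}" unfolding swap_row_kernel_def using space_M_ne by simp
  qed
next
  fix A assume A: "A \<in> sets M"
  have "(\<lambda>x. (\<Sum>l<n. indicator A (Sw l x) * ennreal (acc l x) + indicator A x * ennreal (1 - acc l x)) / of_nat n) \<in> borel_measurable M"
  proof -
    have [measurable]: "l \<in> {..<n} \<Longrightarrow> (\<lambda>x. indicator A (Sw l x) * ennreal (acc l x) + indicator A x * ennreal (1 - acc l x) :: ennreal) \<in> borel_measurable M" for l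
    proof -
      assume "l \<in> {..<n}" then have l: "l < n" by simp
      note [measurable] = Sw_meas[OF l] acc_meas[OF l] A
      show ?thesis by measurable
    qed
    have [measurable]: "(\<lambda>x. (\<Sum>l<n. indicator A (Sw l x) * ennreal (acc l x) + indicator A x * ennreal (1 - acc l x) :: ennreal)) \<in> borel_measurable M"
      by (rule borel_measurable_sum) simp
    show ?thesis by measurable
  qed
  then show "(\<lambda>x. emeasure (KK x) A) \<in> borel_measurable M"
    by (rule measurable_cong[THEN iffD2, rotated]) (simp add: kern_em A)
qed

end

context qrow begin

lemma row_inv: "piQ \<pi> \<beta> N n \<bind> KK = piQ \<pi> \<beta> N n"
proof -
  define Z where "Z = (\<integral>\<^sup>+ y. ennreal (uu y) \<partial>M)"
  define dens where "dens x = ennreal (uu x) / Z" for x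
  have piQ_eq: "piQ \<pi> \<beta> N n = density M dens"
    by (simp add: piQ_def dens_def[abs_def] Z_def uu_def)
  note uu_meas[measurable] kern_meas[measurable]
  have dens_meas[measurable]: "dens \<in> borel_measurable M" unfolding dens_def[abs_def] by measurable
  have sets_piQ: "sets (density M dens) = sets M" by simp
  have space_piQ: "space (density M dens) \<noteq> {}" using space_M_ne by simp
  have kern_meas': "KK \<in> measurable (density M dens) (subprob_algebra M)"
    using kern_meas by (simp add: measurable_cong_sets[OF sets_piQ refl])
  have dacc: "dens x * ennreal (acc l x) = (if Ix l x then ennreal (min (uu x) (uu (Sw l x))) / Z else 0)"
    if x: "x \<in> space M" and l: "l < n" for x l
  proof -
    have "dens x * ennreal (acc l x) = ennreal (uu x * acc l x) / Z"
      unfolding dens_def using uu_nonneg acc_nonneg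
      by (simp add: ennreal_mult divide_ennreal_def mult_ac)
    also have "\<dots> = (if Ix l x then ennreal (min (uu x) (uu (Sw l x))) / Z else 0)"
      using DB[OF x l] by simp
    finally show ?thesis .
  qed
  have per_l: "(\<integral>\<^sup>+x. dens x * (indicator A (Sw l x) * ennreal (acc l x) + indicator A x * ennreal (1 - acc l x)) \<partial>M)
      = emeasure (density M dens) A" if A: "A \<in> sets M" and l: "l < n" for A l
  proof -
    note [measurable] = Sw_meas[OF l] acc_meas[OF l] A Ix_meas[OF l]
    define F where "F y = indicator {y. Ix l y} y * (ennreal (min (uu (Sw l y)) (uu y)) / Z) * indicator A y" for y
    have Fm: "F \<in> borel_measurable M" unfolding F_def by measurable
    have "(\<integral>\<^sup>+x. dens x * (indicator A (Sw l x) * ennreal (acc l x)) \<partial>M)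
        = (\<integral>\<^sup>+x. indicator {x. Ix l x} x * F (Sw l x) \<partial>M)"
    proof (rule nn_integral_cong)
      fix x assume x: "x \<in> space M"
      have "dens x * (indicator A (Sw l x) * ennreal (acc l x)) = (dens x * ennreal (acc l x)) * indicator A (Sw l x)"
        by (simp add: mult_ac)
      also have "\<dots> = indicator {x. Ix l x} x * F (Sw l x)"
      proof (cases "Ix l x")
        case True
        note SI = Sw_invol[OF x l True]
        show ?thesis unfolding dacc[OF x l] F_def using True SI by (simp add: mult_ac)
      next
        case False then show ?thesis unfolding dacc[OF x l] by simp
      qed
      finally show "dens x * (indicator A (Sw l x) * ennreal (acc l x)) = indicator {x. Ix l x} x * F (Sw l x)" .
    qed
    also have "\<dots> = (\<integral>\<^sup>+x. indicator {x. Ix l x} x * F x \<partial>M)"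
      by (rule transfer[OF l Fm])
    also have "\<dots> = (\<integral>\<^sup>+x. dens x * (indicator A x * ennreal (acc l x)) \<partial>M)"
    proof (rule nn_integral_cong)
      fix x assume x: "x \<in> space M"
      show "indicator {x. Ix l x} x * F x = dens x * (indicator A x * ennreal (acc l x))"
      proof -
        have e: "dens x * (indicator A x * ennreal (acc l x)) = (dens x * ennreal (acc l x)) * indicator A x"
          by (simp add: mult_ac)
        show ?thesis unfolding e dacc[OF x l] F_def
          by (cases "Ix l x") (simp_all add: min.commute mult_ac)
      qed
    qed
    finally have DBint: "(\<integral>\<^sup>+x. dens x * (indicator A (Sw l x) * ennreal (acc l x)) \<partial>M)
        = (\<integral>\<^sup>+x. dens x * (indicator A x * ennreal (acc l x)) \<partial>M)" .
    have "(\<integral>\<^sup>+x. dens x * (indicator A (Sw l x) * ennreal (acc l x) + indicator A x * ennreal (1 - acc l x)) \<partial>M)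
        = (\<integral>\<^sup>+x. dens x * (indicator A (Sw l x) * ennreal (acc l x)) + dens x * (indicator A x * ennreal (1 - acc l x)) \<partial>M)"
      by (simp add: distrib_left)
    also have "\<dots> = (\<integral>\<^sup>+x. dens x * (indicator A (Sw l x) * ennreal (acc l x)) \<partial>M) + (\<integral>\<^sup>+x. dens x * (indicator A x * ennreal (1 - acc l x)) \<partial>M)"
      by (rule nn_integral_add) measurable
    also have "\<dots> = (\<integral>\<^sup>+x. dens x * (indicator A x * ennreal (acc l x)) \<partial>M) + (\<integral>\<^sup>+x. dens x * (indicator A x * ennreal (1 - acc l x)) \<partial>M)"
      unfolding DBint ..
    also have "\<dots> = (\<integral>\<^sup>+x. dens x * (indicator A x * ennreal (acc l x)) + dens x * (indicator A x * ennreal (1 - acc l x)) \<partial>M)"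
      by (rule nn_integral_add[symmetric]) measurable
    also have "\<dots> = (\<integral>\<^sup>+x. dens x * indicator A x \<partial>M)"
    proof (rule nn_integral_cong)
      fix x
      have "ennreal (acc l x) + ennreal (1 - acc l x) = 1"
        using acc_nonneg[of l x] acc_le1[of l x] by (simp add: ennreal_plus[symmetric] del: ennreal_plus)
      then show "dens x * (indicator A x * ennreal (acc l x)) + dens x * (indicator A x * ennreal (1 - acc l x)) = dens x * indicator A x"
        by (metis distrib_left mult.right_neutral)
    qed
    also have "\<dots> = emeasure (density M dens) A"
      by (rule emeasure_density[symmetric]) (use A in auto)
    finally show ?thesis .
  qed
  show ?thesis unfolding piQ_eq
  proof (rule measure_eqI)
    show sb: "sets (density M dens \<bind> KK) = sets (density M dens)"
      by (subst sets_bind[OF _ space_piQ]) (auto simp: swap_row_kernel_def)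
    fix A assume "A \<in> sets (density M dens \<bind> KK)"
    then have A: "A \<in> sets M" using sb by simp
    have nn0: "of_nat n \<noteq> (0::ennreal)" using n_pos by simp
    have "emeasure (density M dens \<bind> KK) A = (\<integral>\<^sup>+x. emeasure (KK x) A \<partial>density M dens)"
      by (rule emeasure_bind[OF space_piQ kern_meas' A])
    also have "\<dots> = (\<integral>\<^sup>+x. dens x * emeasure (KK x) A \<partial>M)"
      by (rule nn_integral_density) (use measurable_compose[OF kern_meas measurable_emeasure_subprob_algebra[OF A]] in auto)
    also have "\<dots> = (\<integral>\<^sup>+x. (\<Sum>l<n. dens x * (indicator A (Sw l x) * ennreal (acc l x) + indicator A x * ennreal (1 - acc l x))) / of_nat n \<partial>M)"
      by (intro nn_integral_cong) (simp add: kern_em A ennreal_times_divide sum_distrib_left)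
    also have "\<dots> = (\<integral>\<^sup>+x. (\<Sum>l<n. dens x * (indicator A (Sw l x) * ennreal (acc l x) + indicator A x * ennreal (1 - acc l x))) \<partial>M) / of_nat n"
    proof (rule nn_integral_divide)
      have [measurable]: "l \<in> {..<n} \<Longrightarrow> (\<lambda>x. dens x * (indicator A (Sw l x) * ennreal (acc l x) + indicator A x * ennreal (1 - acc l x))) \<in> borel_measurable M" for l
      proof -
        assume "l \<in> {..<n}" then have l: "l < n" by simp
        note [measurable] = Sw_meas[OF l] acc_meas[OF l] A
        show ?thesis by measurable
      qed
      show "(\<lambda>x. \<Sum>l<n. dens x * (indicator A (Sw l x) * ennreal (acc l x) + indicator A x * ennreal (1 - acc l x))) \<in> borel_measurable M"
        by (rule borel_measurable_sum) simp
    qed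
    also have "(\<integral>\<^sup>+x. (\<Sum>l<n. dens x * (indicator A (Sw l x) * ennreal (acc l x) + indicator A x * ennreal (1 - acc l x))) \<partial>M)
        = (\<Sum>l<n. (\<integral>\<^sup>+x. dens x * (indicator A (Sw l x) * ennreal (acc l x) + indicator A x * ennreal (1 - acc l x)) \<partial>M))"
    proof (rule nn_integral_sum)
      fix l assume "l \<in> {..<n}" then have l: "l < n" by simp
      note [measurable] = Sw_meas[OF l] acc_meas[OF l] A
      show "(\<lambda>x. dens x * (indicator A (Sw l x) * ennreal (acc l x) + indicator A x * ennreal (1 - acc l x))) \<in> borel_measurable M"
        by measurable
    qed
    also have "\<dots> = (\<Sum>l<n. emeasure (density M dens) A)"
      by (intro sum.cong refl per_l[OF A]) simp
    also have "\<dots> = emeasure (density M dens) A * of_nat n" by (simp add: mult.commute)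
    finally show "emeasure (density M dens \<bind> KK) A = emeasure (density M dens) A"
      using nn0 by (simp add: ennreal_mult_divide_eq)
  qed
qed

end

definition inv_kern :: "'b measure \<Rightarrow> 'b measure \<Rightarrow> ('b \<Rightarrow> 'b measure) \<Rightarrow> bool" where
  "inv_kern Q S K \<longleftrightarrow> K \<in> measurable S (subprob_algebra S) \<and> Q \<bind> K = Q"

lemma inv_comp:
  assumes QS: "sets Q = sets S" and K: "inv_kern Q S K" and L: "inv_kern Q S L"
  shows "inv_kern Q S (\<lambda>x. K x \<bind> L)"
proof -
  have Km: "K \<in> measurable S (subprob_algebra S)" and Lm: "L \<in> measurable S (subprob_algebra S)"
    using K L unfolding inv_kern_def by auto
  have KmQ: "K \<in> measurable Q (subprob_algebra S)"
    using Km by (simp add: measurable_cong_sets[OF QS refl])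
  have "Q \<bind> (\<lambda>x. K x \<bind> L) = (Q \<bind> K) \<bind> L"
    by (rule bind_assoc[OF KmQ Lm, symmetric])
  also have "\<dots> = Q" using K L unfolding inv_kern_def by simp
  finally show ?thesis unfolding inv_kern_def using measurable_bind2[OF Km Lm] by simp
qed

lemma inv_return:
  assumes QS: "sets Q = sets S"
  shows "inv_kern Q S (return S)"
  unfolding inv_kern_def using QS by (simp add: return_measurable bind_return'')

lemma inv_kpow:
  assumes QS: "sets Q = sets S" and K: "inv_kern Q S K"
  shows "inv_kern Q S (kpow S K j)"
proof (induction j)
  case 0 then show ?case using inv_return[OF QS] by simp
next
  case (Suc j) then show ?case using inv_comp[OF QS Suc K] by simp
qed

lemma inv_kseq:
  assumes QS: "sets Q = sets S"
  shows "(\<forall>K\<in>set Ks. inv_kern Q S K) \<Longrightarrow> inv_kern Q S (kseq S Ks)"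
proof (induction Ks)
  case Nil then show ?case using inv_return[OF QS] by simp
next
  case (Cons K Ks) then show ?case using inv_comp[OF QS] by simp
qed

lemma beta_mono:
  fixes \<beta> :: "nat \<Rightarrow> real"
  assumes dec: "\<And>j. j < n \<Longrightarrow> \<beta> (Suc j) < \<beta> j"
  shows "j + k \<le> n \<Longrightarrow> \<beta> (j + k) \<le> \<beta> j"
proof (induction k)
  case 0 then show ?case by simp
next
  case (Suc k)
  then have "\<beta> (Suc (j + k)) < \<beta> (j + k)" using dec by simp
  with Suc show ?case by simp
qed

theorem proposition2:
  fixes \<pi> :: "'a::euclidean_space \<Rightarrow> real"
    and \<beta> :: "nat \<Rightarrow> real"
    and N n k T :: nat
    and m :: "'a \<Rightarrow> 'a \<Rightarrow> real"
    and mu1 mu2 :: "(nat \<times> nat \<Rightarrow> 'a) \<Rightarrow> nat \<Rightarrow> 'a"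
    and K1 K2 :: "(nat \<times> nat \<Rightarrow> 'a) \<Rightarrow> nat"
    and P1 :: "(nat \<times> nat \<Rightarrow> 'a) \<Rightarrow> (nat \<times> nat \<Rightarrow> 'a) measure"
  assumes pi_meas: "\<pi> \<in> borel_measurable lborel"
    and pi_nonneg: "\<And>x. 0 \<le> \<pi> x"
    and pi_dens: "(\<integral>\<^sup>+ x. ennreal (\<pi> x) \<partial>lborel) = 1"
    and n_pos: "1 \<le> n"
    and beta0: "\<beta> 0 = 1"
    and beta_dec: "\<And>j. j < n \<Longrightarrow> \<beta> (Suc j) < \<beta> j"
    and beta_pos: "0 < \<beta> n"
    and N2: "2 \<le> N"
    and piQ_fin: "(\<integral>\<^sup>+ y. ennreal (unnorm_piQ \<pi> \<beta> N n y) \<partial>cfg_space N n) < \<infinity>"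
    and m_metric: "\<And>x y. m x y = 0 \<longleftrightarrow> x = y" "\<And>x y. m x y = m y x"
                  "\<And>x y z. m x z \<le> m x y + m y z"
    and m_meas: "(\<lambda>p. m (fst p) (snd p)) \<in> borel_measurable borel"
    and mu1_meas: "\<And>h. (\<lambda>x. mu1 x h) \<in> borel_measurable (cfg_space N n)"
    and K1_meas: "K1 \<in> measurable (cfg_space N n) (count_space UNIV)"
    and K1_pos: "\<And>x. x \<in> space (cfg_space N n) \<Longrightarrow> 1 \<le> K1 x"
    and mu1_C1: "\<And>x y. x \<in> space (cfg_space N n) \<Longrightarrow> y \<in> space (cfg_space N n) \<Longrightarrow>
        (\<forall>i j. i \<le> N div 2 \<and> (i, j) \<in> cfg_index N n \<longrightarrow> x (i, j) = y (i, j)) \<Longrightarrow>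
        mu1 x = mu1 y \<and> K1 x = K1 y"
    and mu2_meas: "\<And>h. (\<lambda>x. mu2 x h) \<in> borel_measurable (cfg_space N n)"
    and K2_meas: "K2 \<in> measurable (cfg_space N n) (count_space UNIV)"
    and K2_pos: "\<And>x. x \<in> space (cfg_space N n) \<Longrightarrow> 1 \<le> K2 x"
    and mu2_C2: "\<And>x y. x \<in> space (cfg_space N n) \<Longrightarrow> y \<in> space (cfg_space N n) \<Longrightarrow>
        (\<forall>i j. N div 2 < i \<and> (i, j) \<in> cfg_index N n \<longrightarrow> x (i, j) = y (i, j)) \<Longrightarrow>
        mu2 x = mu2 y \<and> K2 x = K2 y"
    and P1_kernel: "P1 \<in> measurable (cfg_space N n) (prob_algebra (cfg_space N n))"
    and P1_inv: "piQ \<pi> \<beta> N n \<bind> P1 = piQ \<pi> \<beta> N n"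
    and k_pos: "1 \<le> k"
    and T_pos: "1 \<le> T"
  shows "piQ \<pi> \<beta> N n \<bind>
           kpow (cfg_space N n)
             (\<lambda>x. kpow (cfg_space N n) P1 k x \<bind> quanta_P2 \<pi> m mu1 K1 mu2 K2 \<beta> N n) T
         = piQ \<pi> \<beta> N n"
proof -
  define Q where "Q = piQ \<pi> \<beta> N n"
  define S where "S = (cfg_space N n :: (nat \<times> nat \<Rightarrow> 'a) measure)"
  have QS: "sets Q = sets S" unfolding Q_def S_def piQ_def by simp
  have bpos: "0 < \<beta> j" if jn: "j \<le> n" for j
  proof -
    have "\<beta> (j + (n - j)) \<le> \<beta> j"
      using beta_mono[where \<beta>=\<beta> and n=n and j=j and k="n-j", OF beta_dec] jn by simp
    then have "\<beta> n \<le> \<beta> j" using jn by simp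
    then show ?thesis using beta_pos jn by simp
  qed
  have pim: "\<pi> \<in> borel_measurable borel" using pi_meas by simp
  have spc: "x((i,l) := u, (i, Suc l) := v) \<in> space (cfg_space N n)"
    if x: "x \<in> space (cfg_space N n)" and i: "1 \<le> i" "i \<le> N" and l: "l < n" for x :: "nat \<times> nat \<Rightarrow> 'a" and i l u v
    using x i l by (auto simp: cfg_space_def cfg_index_def space_PiM PiE_def extensional_def)
  have row1: "inv_kern Q S (swap_row_kernel \<pi> m mu1 K1 \<beta> N n i)" if i: "N div 2 < i" "i \<le> N" for i
  proof -
    interpret qrow \<pi> m \<beta> N n mu1 K1 i
    proof
      show "\<And>x l u v. x \<in> space (cfg_space N n) \<Longrightarrow> l < n \<Longrightarrow>
         mu1 (x((i,l):=u, (i,Suc l):=v)) = mu1 x \<and> K1 (x((i,l):=u, (i,Suc l):=v)) = K1 x"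
        by (rule mu1_C1) (use spc i in auto)
    qed (use pim pi_nonneg m_meas bpos n_pos i mu1_meas K1_meas K1_pos in auto)
    show ?thesis unfolding inv_kern_def Q_def S_def using row_inv kern_meas by simp
  qed
  have row2: "inv_kern Q S (swap_row_kernel \<pi> m mu2 K2 \<beta> N n i)" if i: "1 \<le> i" "i \<le> N div 2" for i
  proof -
    have iN: "i \<le> N" using i by simp
    interpret qrow \<pi> m \<beta> N n mu2 K2 i
    proof
      show "\<And>x l u v. x \<in> space (cfg_space N n) \<Longrightarrow> l < n \<Longrightarrow>
         mu2 (x((i,l):=u, (i,Suc l):=v)) = mu2 x \<and> K2 (x((i,l):=u, (i,Suc l):=v)) = K2 x"
        by (rule mu2_C2) (use spc i iN in auto)
    qed (use pim pi_nonneg m_meas bpos n_pos i iN mu2_meas K2_meas K2_pos in auto)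
    show ?thesis unfolding inv_kern_def Q_def S_def using row_inv kern_meas by simp
  qed
  have ph1: "inv_kern Q S (quanta_phase \<pi> m mu1 K1 \<beta> N n [N div 2 + 1 ..< N + 1])"
    unfolding quanta_phase_def S_def[symmetric] by (rule inv_kseq[OF QS]) (auto intro!: row1)
  have ph2: "inv_kern Q S (quanta_phase \<pi> m mu2 K2 \<beta> N n [1 ..< N div 2 + 1])"
    unfolding quanta_phase_def S_def[symmetric] by (rule inv_kseq[OF QS]) (auto intro!: row2)
  have P2: "inv_kern Q S (quanta_P2 \<pi> m mu1 K1 mu2 K2 \<beta> N n)"
    unfolding quanta_P2_def by (rule inv_comp[OF QS ph1 ph2])
  have P1i: "inv_kern Q S P1"
    unfolding inv_kern_def Q_def S_def using measurable_prob_algebraD[OF P1_kernel] P1_inv by simp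
  have step: "inv_kern Q S (\<lambda>x. kpow S P1 k x \<bind> quanta_P2 \<pi> m mu1 K1 mu2 K2 \<beta> N n)"
    by (rule inv_comp[OF QS inv_kpow[OF QS P1i] P2])
  have "inv_kern Q S (kpow S (\<lambda>x. kpow S P1 k x \<bind> quanta_P2 \<pi> m mu1 K1 mu2 K2 \<beta> N n) T)"
    by (rule inv_kpow[OF QS step])
  then show ?thesis unfolding inv_kern_def Q_def S_def by simp
qed

end
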